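(* For every $k\geq 0$, the polynomial $H_k(x)$ is symmetric: for all integers $m$, the coefficient of $x^m$ in $H_k(x)$ equals the coefficient of $x^{2(k+1)(k+2)-1-m}$. Equivalently, writing $h_k(i,j)$ for the coefficient of $x^{2(k+1)i+j}$, one has $h_k(i,j)=h_k(k+1-i,\,2k+1-j)$ for $0\le i\le k+1$, $0\le j\le 2k+1$.
   Context: $B_n(y)=\sum_{\pi\in B_n}y^{\mathrm{des}_B(\pi)}$ is the type $B$ Eulerian polynomial: $B_n$ is the set of signed permutations $\pi_1\cdots\pi_n$ of $[n]$, and with $\pi_0=0$, $\mathrm{des}_B(\pi)$ counts $i\in\{0,\dots,n-1\}$ with $\pi_i>\pi_{i+1}$; $B_0=1$. Define \[H_k(x)=\sum_{l=0}^{k}B_{k-l}(x^{2k+2})(x^{2k+2}-1)^l\sum_{s=l}^{k}\binom{s}{l}x^{2k+1-s}+\sum_{l=0}^{k}B_{k-l}(x^{-2k-2})(x^{-2k-2}-1)^l\sum_{s=l}^{k}\binom{s}{l}x^{2(k+1)^2+s}.\] *)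

theory Defs
  imports Complex_Main "HOL-Computational_Algebra.Formal_Laurent_Series"
begin

definition signed_perms :: "nat \<Rightarrow> int list set" where
  "signed_perms n = {\<pi>. length \<pi> = n \<and> distinct (map abs \<pi>) \<and> set (map abs \<pi>) = {1..int n}}"

definition desB :: "int list \<Rightarrow> nat" where
  "desB \<pi> = card {i. i < length \<pi> \<and> (0 # \<pi>) ! i > (0 # \<pi>) ! Suc i}"

definition eulerB :: "nat \<Rightarrow> 'a::comm_ring_1 \<Rightarrow> 'a" where
  "eulerB n y = (\<Sum>\<pi>\<in>signed_perms n. y ^ desB \<pi>)"

definition H :: "nat \<Rightarrow> int fls" where
  "H k =
    (\<Sum>l=0..k. eulerB (k - l) (fls_X ^ (2*k+2)) * (fls_X ^ (2*k+2) - 1) ^ l *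
        (\<Sum>s=l..k. of_nat (s choose l) * fls_X ^ (2*k+1-s)))
  + (\<Sum>l=0..k. eulerB (k - l) (fls_X_inv ^ (2*k+2)) * (fls_X_inv ^ (2*k+2) - 1) ^ l *
        (\<Sum>s=l..k. of_nat (s choose l) * fls_X ^ (2*(k+1)^2+s)))"

end

theory Submission
  imports Defs
begin

definition cP :: "int poly \<Rightarrow> int fls poly" where "cP p = map_poly fls_const p"
definition ev :: "int fls \<Rightarrow> int poly \<Rightarrow> int fls" where "ev x p = poly (cP p) x"

lemma fc_add: "fls_const (a + b) = fls_const a + (fls_const b :: int fls)"
  by (intro fls_eqI) simp
lemma fc_diff: "fls_const (a - b) = fls_const a - (fls_const b :: int fls)"
  by (intro fls_eqI) simp
lemma fc_sum: "fls_const (\<Sum>i\<in>A. f i) = (\<Sum>i\<in>A. fls_const (f i) :: int fls)"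
  by (induction A rule: infinite_finite_induct) (auto simp: fc_add)
lemma coeff_cP: "coeff (cP p) n = fls_const (coeff p n)"
  by (simp add: cP_def coeff_map_poly)

lemma cP_add: "cP (p + q) = cP p + cP q"
  by (rule poly_eqI) (simp add: coeff_cP fc_add)
lemma cP_diff: "cP (p - q) = cP p - cP q"
  by (rule poly_eqI) (simp add: coeff_cP fc_diff)
lemma cP_mult: "cP (p * q) = cP p * cP q"
  by (rule poly_eqI) (simp add: coeff_cP coeff_mult fc_sum)
lemma cP_1: "cP 1 = 1" by (simp add: cP_def)
lemma cP_X: "cP [:0,1:] = [:0,1:]" by (simp add: cP_def map_poly_pCons)

lemma ev_add: "ev x (p + q) = ev x p + ev x q" by (simp add: ev_def cP_add)
lemma ev_diff: "ev x (p - q) = ev x p - ev x q" by (simp add: ev_def cP_diff)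
lemma ev_mult: "ev x (p * q) = ev x p * ev x q" by (simp add: ev_def cP_mult)
lemma ev_1: "ev x 1 = 1" by (simp add: ev_def cP_1)
lemma ev_X: "ev x [:0,1:] = x" by (simp add: ev_def cP_X)
lemma ev_power: "ev x (p ^ n) = ev x p ^ n" by (induction n) (simp_all add: ev_1 ev_mult)
lemma ev_0: "ev x 0 = 0" by (simp add: ev_def cP_def)
lemma ev_sum: "ev x (\<Sum>i\<in>A. f i) = (\<Sum>i\<in>A. ev x (f i))"
  by (induction A rule: infinite_finite_induct) (auto simp: ev_add ev_0)
lemma ev_of_nat: "ev x (of_nat n) = of_nat n"
proof (induction n)
  case (Suc n)
  have "ev x (of_nat (Suc n)) = ev x (1 + of_nat n)" by simp
  also have "\<dots> = 1 + of_nat n" by (simp only: ev_add ev_1 Suc)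
  finally show ?case by simp
qed (simp add: ev_0)
lemma ev_eulerB: "eulerB n (ev x p) = ev x (eulerB n p)"
  by (simp add: eulerB_def ev_sum ev_power)

lemma X_Xi: "fls_nth (fls_X ^ D * fls_X_inv ^ i) m = (if m = int D - int i then 1 else (0::int))"
  by (simp add: fls_X_power_times_conv_shift fls_X_inv_power_conv_shift_1)
lemma ev_alt: "ev x p = (\<Sum>i\<le>degree (cP p). fls_const (coeff p i) * x ^ i)"
  unfolding ev_def poly_altdef coeff_cP ..

lemma nth_evX: "fls_nth (ev fls_X p) m = (if 0 \<le> m then coeff p (nat m) else 0)"
proof -
  have "fls_nth (ev fls_X p) m = (\<Sum>i\<le>degree (cP p). coeff p i * (if m = int i then 1 else 0))"
    unfolding ev_alt fls_nth_sum fls_mult_const_nth fls_X_power_nth ..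
  also have "\<dots> = (\<Sum>i\<in>{..degree (cP p)} \<inter> {i. m = int i}. coeff p i)"
    by (simp add: sum.inter_restrict; intro sum.cong; simp)
  also have "\<dots> = (if 0 \<le> m then coeff p (nat m) else 0)"
  proof (cases "0 \<le> m")
    case True
    show ?thesis
    proof (cases "nat m \<le> degree (cP p)")
      case True
      hence "{..degree (cP p)} \<inter> {i. m = int i} = {nat m}" using \<open>0 \<le> m\<close> by auto
      thus ?thesis using \<open>0 \<le> m\<close> by simp
    next
      case False
      hence "{..degree (cP p)} \<inter> {i. m = int i} = {}" using \<open>0 \<le> m\<close> by auto
      moreover have "coeff (cP p) (nat m) = 0" using False by (simp add: coeff_eq_0)
      ultimately show ?thesis using \<open>0 \<le> m\<close> by (simp add: coeff_cP)
    qed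
  next
    case False
    hence "{..degree (cP p)} \<inter> {i. m = int i} = {}" by auto
    thus ?thesis using False by simp
  qed
  finally show ?thesis .
qed
lemma X_Xi2: "b \<le> a \<Longrightarrow> fls_X ^ a * fls_X_inv ^ b = (fls_X ^ (a - b) :: int fls)"
  by (rule fls_eqI) (simp add: X_Xi of_nat_diff)

lemma nth_evXi: "fls_nth (fls_X ^ D * ev fls_X_inv p) m = (if 0 \<le> int D - m then coeff p (nat (int D - m)) else 0)"
proof -
  have "fls_nth (fls_X ^ D * ev fls_X_inv p) m = (\<Sum>i\<le>degree (cP p). coeff p i * fls_nth (fls_X ^ D * fls_X_inv ^ i) m)"
    unfolding ev_alt sum_distrib_left fls_nth_sum mult.left_commute[of "fls_X ^ D"] fls_mult_const_nth ..
  also have "\<dots> = (\<Sum>i\<le>degree (cP p). coeff p i * (if int D - m = int i then 1 else 0))"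
    unfolding X_Xi by (intro sum.cong) auto
  also have "\<dots> = fls_nth (ev fls_X p) (int D - m)"
    unfolding ev_alt fls_nth_sum fls_mult_const_nth fls_X_power_nth ..
  finally show ?thesis by (simp add: nth_evX)
qed

lemma gen: "(c::'a::comm_ring_1) * (\<Sum>l\<in>A. a l * (\<Sum>s\<in>B l. b l s * y s)) = (\<Sum>l\<in>A. a l * (\<Sum>s\<in>B l. b l s * (c * y s)))"
  by (simp add: sum_distrib_left mult_ac)

definition pX :: "int poly" where "pX = [:0,1:]"
definition F :: "nat \<Rightarrow> int poly" where
  "F k = (\<Sum>l=0..k. eulerB (k - l) (pX ^ (2*k+2)) * (pX ^ (2*k+2) - 1) ^ l *
        (\<Sum>s=l..k. of_nat (s choose l) * pX ^ (2*k+1-s)))"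

lemma T1: "(\<Sum>l=0..k. eulerB (k - l) (fls_X ^ (2*k+2)) * (fls_X ^ (2*k+2) - 1) ^ l *
        (\<Sum>s=l..k. of_nat (s choose l) * fls_X ^ (2*k+1-s))) = ev fls_X (F k)"
  unfolding F_def pX_def by (simp only: ev_sum ev_mult ev_power ev_diff ev_1 ev_X ev_of_nat ev_eulerB[symmetric])

lemma T2: "(\<Sum>l=0..k. eulerB (k - l) (fls_X_inv ^ (2*k+2)) * (fls_X_inv ^ (2*k+2) - 1) ^ l *
        (\<Sum>s=l..k. of_nat (s choose l) * fls_X ^ (2*(k+1)^2+s))) = fls_X ^ (2*(k+1)*(k+2)-1) * ev fls_X_inv (F k)"
proof -
  have e: "ev fls_X_inv (F k) = (\<Sum>l=0..k. eulerB (k - l) (fls_X_inv ^ (2*k+2)) * (fls_X_inv ^ (2*k+2) - 1) ^ l *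
        (\<Sum>s=l..k. of_nat (s choose l) * fls_X_inv ^ (2*k+1-s)))"
    unfolding F_def pX_def by (simp only: ev_sum ev_mult ev_power ev_diff ev_1 ev_X ev_of_nat ev_eulerB[symmetric])
  have "fls_X ^ (2*(k+1)*(k+2)-1) * ev fls_X_inv (F k) = (\<Sum>l=0..k. eulerB (k - l) (fls_X_inv ^ (2*k+2)) * (fls_X_inv ^ (2*k+2) - 1) ^ l *
        (\<Sum>s=l..k. of_nat (s choose l) * (fls_X ^ (2*(k+1)*(k+2)-1) * fls_X_inv ^ (2*k+1-s))))"
    unfolding e by (rule gen)
  also have "\<dots> = (\<Sum>l=0..k. eulerB (k - l) (fls_X_inv ^ (2*k+2)) * (fls_X_inv ^ (2*k+2) - 1) ^ l *
        (\<Sum>s=l..k. of_nat (s choose l) * fls_X ^ (2*(k+1)^2+s)))"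
  proof (intro sum.cong refl arg_cong2[where f="(*)"])
    fix l s assume "s \<in> {l..k}"
    hence a: "2*k+1-s \<le> 2*(k+1)*(k+2)-1" and b: "2*(k+1)*(k+2)-1 - (2*k+1-s) = 2*(k+1)^2+s"
      by (auto simp: algebra_simps power2_eq_square)
    show "fls_X ^ (2*(k+1)*(k+2)-1) * fls_X_inv ^ (2*k+1-s) = (fls_X ^ (2*(k+1)^2+s) :: int fls)"
      unfolding X_Xi2[OF a] b ..
  qed
  finally show ?thesis ..
qed

theorem corollary3p3:
  fixes k :: nat
  shows "(\<forall>m::int. fls_nth (H k) m = fls_nth (H k) (2 * (int k + 1) * (int k + 2) - 1 - m)) \<and>
         (\<forall>i j::int. 0 \<le> i \<and> i \<le> int k + 1 \<and> 0 \<le> j \<and> j \<le> 2 * int k + 1 \<longrightarrow>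
            fls_nth (H k) (2 * (int k + 1) * i + j) =
            fls_nth (H k) (2 * (int k + 1) * (int k + 1 - i) + (2 * int k + 1 - j)))"
proof -
  define D where "D = 2*(k+1)*(k+2)-1"
  have Di: "int D = 2 * (int k + 1) * (int k + 2) - 1" unfolding D_def
    by (simp add: of_nat_diff algebra_simps)
  define g where "g j = (if 0 \<le> j then coeff (F k) (nat j) else 0)" for j
  have HH: "H k = ev fls_X (F k) + fls_X ^ D * ev fls_X_inv (F k)"
    unfolding H_def T1 T2 D_def ..
  have nth: "fls_nth (H k) m = g m + g (int D - m)" for m
    unfolding HH fls_plus_nth nth_evX nth_evXi g_def ..
  have A: "\<forall>m::int. fls_nth (H k) m = fls_nth (H k) (2 * (int k + 1) * (int k + 2) - 1 - m)"
    unfolding nth Di[symmetric] by simp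
  show ?thesis
  proof (intro conjI A allI impI)
    fix i j :: int
    have eq: "2 * (int k + 1) * (int k + 1 - i) + (2 * int k + 1 - j) = 2 * (int k + 1) * (int k + 2) - 1 - (2 * (int k + 1) * i + j)"
      by (simp add: algebra_simps)
    show "fls_nth (H k) (2 * (int k + 1) * i + j) =
            fls_nth (H k) (2 * (int k + 1) * (int k + 1 - i) + (2 * int k + 1 - j))"
      unfolding eq by (rule A[rule_format])
  qed
qed
end
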